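(* Let $\omega>0$, $a,b\in\mathbb{R}$, and let $\chi_\delta(x,t)$ be the solution of $$ i\dot\chi(x,t)=-\chi''(x,t)+\omega\chi(x,t)-\delta(x)\bigl[a\chi(0,t)+b\operatorname{Re}\chi(0,t)\bigr] $$ with $\chi_\delta(x,0)=\delta(x)$. Then $$ \|\chi_\delta(\cdot,t)\|_{L^\infty}=O(t^{-1/2}),\qquad t\to0^+. $$
   Context: $\delta$ is the Dirac distribution at $0$. (In the paper $a=a(C^2)$, $b=2a'(C^2)C^2$, $\omega=a(C^2)^2/4$ and this is the linearized equation at a solitary wave; the solution is understood via the Duhamel formula with the free group $e^{i(\partial_x^2-\omega)t}$.) *)

theory Defs
  imports "HOL-Analysis.Analysis"
begin

text \<open>Kernel of the free group e^{i(d^2/dx^2 - omega) t} applied to the Dirac delta: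
  U(x,t) = e^{-i omega t} (4 pi i t)^{-1/2} e^{i x^2/(4t)}, for t > 0.\<close>
definition free_kernel :: "real \<Rightarrow> real \<Rightarrow> real \<Rightarrow> complex" where
  "free_kernel \<omega> x t =
     exp (- \<i> * complex_of_real (\<omega> * t)) * exp (\<i> * complex_of_real (x\<^sup>2 / (4 * t)))
       / csqrt (\<i> * complex_of_real (4 * pi * t))"

text \<open>chi (x,t) is a (Duhamel/mild) solution of
  i chi_t = - chi_xx + omega chi - delta(x) [a chi(0,t) + b Re chi(0,t)],  chi(.,0) = delta,
  i.e. for all x and t > 0
  chi(x,t) = U(x,t) + i int_0^t U(x,t-s) [a chi(0,s) + b Re chi(0,s)] ds
  (Lebesgue integral, the integrand being integrable).\<close>
definition delta_duhamel_solution ::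
  "real \<Rightarrow> real \<Rightarrow> real \<Rightarrow> (real \<Rightarrow> real \<Rightarrow> complex) \<Rightarrow> bool" where
  "delta_duhamel_solution \<omega> a b u \<longleftrightarrow>
     (\<forall>x. \<forall>t>0.
        set_integrable lborel {0<..<t}
          (\<lambda>s. free_kernel \<omega> x (t - s) *
                 (complex_of_real a * u 0 s + complex_of_real (b * Re (u 0 s)))) \<and>
        u x t = free_kernel \<omega> x t +
          \<i> * (LINT s:{0<..<t}|lborel. free_kernel \<omega> x (t - s) *
                 (complex_of_real a * u 0 s + complex_of_real (b * Re (u 0 s)))))"

end

theory Submission imports Defs begin

definition kk :: "real \<Rightarrow> real" where "kk \<tau> = 1 / sqrt (4 * pi * \<tau>)"

lemma kernel_norm:
  assumes "t > 0" shows "cmod (free_kernel \<omega> x t) = kk t"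
  using assms by (simp add: free_kernel_def kk_def norm_divide norm_mult norm_exp_eq_Re)

lemma Beta_half: "Beta (1/2) (1/2 :: real) = pi"
  by (simp add: Beta_def Gamma_one_half_real)

lemma beta_nn:
  "(\<integral>\<^sup>+v. ennreal (indicator {0..1} v * (v powr (1/2 - 1) * (1 - v) powr (1/2 - 1))) \<partial>lborel) = ennreal pi"
proof -
  have "((\<lambda>v. v powr (1/2 - 1) * (1 - v) powr (1/2 - 1)) has_integral pi) {0..1::real}"
    using has_integral_Beta_real[of "1/2" "1/2"] by (simp add: Beta_half)
  from nn_integral_has_integral_lebesgue[OF _ this] show ?thesis by simp
qed

lemma stepB:
  fixes r t :: real assumes rt: "r < t"
  shows "(\<integral>\<^sup>+s. (if r < s \<and> s < t then ennreal (kk (t - s) * kk (s - r)) else 0) \<partial>lborel) = ennreal (1/4)"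
proof -
  define L where "L = t - r"
  have L: "L > 0" using rt by (simp add: L_def)
  let ?f = "\<lambda>s. (if r < s \<and> s < t then ennreal (kk (t - s) * kk (s - r)) else 0)"
  have meas: "?f \<in> borel_measurable borel" unfolding kk_def by measurable
  have "(\<integral>\<^sup>+s. ?f s \<partial>lborel) = \<bar>L\<bar> * (\<integral>\<^sup>+v. ?f (r + L * v) \<partial>lborel)"
    by (rule nn_integral_real_affine[OF meas]) (use L in simp)
  also have "(\<lambda>v. ?f (r + L * v)) = (\<lambda>v. ennreal (1 / (4 * pi * L)) *
      ennreal (indicator {0..1} v * (v powr (1/2 - 1) * (1 - v) powr (1/2 - 1))))"
  proof
    fix v :: real
    show "?f (r + L * v) = ennreal (1 / (4 * pi * L)) *
      ennreal (indicator {0..1} v * (v powr (1/2 - 1) * (1 - v) powr (1/2 - 1)))"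
    proof (cases "0 < v \<and> v < 1")
      case True
      have "L * v < L * 1" using True L by (intro mult_strict_left_mono) auto
      moreover have "r + L = t" by (simp add: L_def)
      moreover have "0 < L * v" using True L by simp
      ultimately have e1: "r < r + L * v \<and> r + L * v < t" by linarith
      have "kk (t - (r + L * v)) * kk (r + L * v - r) = 1 / (4 * pi * L) * (v powr (1/2 - 1) * (1 - v) powr (1/2 - 1))"
      proof -
        have a1: "t - (r + L * v) = L * (1 - v)" by (simp add: L_def algebra_simps)
        have a2: "r + L * v - r = L * v" by simp
        have p1: "v powr (1/2 - 1) = 1 / sqrt v" using True
          by (simp add: powr_minus_divide powr_half_sqrt[symmetric] powr_diff)
        have p2: "(1 - v) powr (1/2 - 1) = 1 / sqrt (1 - v)" using True
          by (simp add: powr_minus_divide powr_half_sqrt[symmetric] powr_diff)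
        have "sqrt (4 * pi * (L * (1 - v))) * sqrt (4 * pi * (L * v)) = sqrt ((4 * pi * L)\<^sup>2 * (v * (1 - v)))"
          by (simp add: real_sqrt_mult[symmetric] power2_eq_square algebra_simps)
        also have "\<dots> = 4 * pi * L * (sqrt v * sqrt (1 - v))" using L
          by (simp add: real_sqrt_mult)
        finally have q: "sqrt (4 * pi * (L * (1 - v))) * sqrt (4 * pi * (L * v)) = 4 * pi * L * (sqrt v * sqrt (1 - v))" .
        have "kk (L * (1 - v)) * kk (L * v) = 1 / (sqrt (4 * pi * (L * (1 - v))) * sqrt (4 * pi * (L * v)))"
          by (simp add: kk_def)
        also have "\<dots> = 1 / (4 * pi * L) * (1 / sqrt v * (1 / sqrt (1 - v)))" unfolding q by (simp only: divide_divide_eq_left mult_1_right times_divide_eq_right mult.assoc)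
        finally show ?thesis unfolding a1 a2 p1 p2 .
      qed
      then show ?thesis using True e1 L by (simp add: ennreal_mult[symmetric])
    next
      case False
      have "r + L = t" by (simp add: L_def)
      moreover have "v \<le> 0 \<Longrightarrow> L * v \<le> 0" using L by (simp add: mult_nonneg_nonpos)
      moreover have "v \<ge> 1 \<Longrightarrow> L * v \<ge> L * 1" using L by (intro mult_left_mono) auto
      ultimately have "\<not> (r < r + L * v \<and> r + L * v < t)" using False by (cases "v \<le> 0") auto
      note nc = this
      have zi: "indicator {0..1} v * (v powr (1/2 - 1) * (1 - v) powr (1/2 - 1)) = 0"
        using False by (auto simp: indicator_def)
      show ?thesis by (simp only: nc zi if_False ennreal_0 mult_zero_right)
    qed
  qed
  also have "(\<integral>\<^sup>+v. ennreal (1 / (4 * pi * L)) *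
      ennreal (indicator {0..1} v * (v powr (1/2 - 1) * (1 - v) powr (1/2 - 1))) \<partial>lborel)
      = ennreal (1 / (4 * pi * L)) * ennreal pi"
    by (subst nn_integral_cmult) (auto simp: beta_nn[simplified])
  also have "ennreal \<bar>L\<bar> * (ennreal (1 / (4 * pi * L)) * ennreal pi) = ennreal (1/4)"
    using L by (simp add: ennreal_mult[symmetric])
  finally show ?thesis by simp
qed

definition ww :: "real \<Rightarrow> real \<Rightarrow> (real \<Rightarrow> real \<Rightarrow> complex) \<Rightarrow> real \<Rightarrow> complex" where
  "ww a b u s = complex_of_real a * u 0 s + complex_of_real (b * Re (u 0 s))"
definition HH :: "real \<Rightarrow> real \<Rightarrow> (real \<Rightarrow> real \<Rightarrow> complex) \<Rightarrow> real \<Rightarrow> real" where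
  "HH a b u s = (if 0 < s then cmod (ww a b u s) else 0)"
definition JJ :: "real \<Rightarrow> real \<Rightarrow> (real \<Rightarrow> real \<Rightarrow> complex) \<Rightarrow> real \<Rightarrow> ennreal" where
  "JJ a b u t = (\<integral>\<^sup>+s. (if 0 < s \<and> s < t then ennreal (kk (t - s) * HH a b u s) else 0) \<partial>lborel)"

lemma kk_nonneg: "\<tau> \<ge> 0 \<Longrightarrow> kk \<tau> \<ge> 0"
  by (simp add: kk_def)

lemma kk_sqrt: "\<tau> > 0 \<Longrightarrow> kk \<tau> * sqrt (4 * pi * \<tau>) = 1"
  by (simp add: kk_def)

lemma HH_meas:
  assumes sol: "delta_duhamel_solution \<omega> a b u"
  shows "HH a b u \<in> borel_measurable borel"
proof -
  define Hn where "Hn n s = (if 0 < s \<and> s < real n then cmod (ww a b u s) else 0)" for n :: nat and s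
  have Hn: "Hn n \<in> borel_measurable borel" for n
  proof (cases "n = 0")
    case True
    then have "Hn n = (\<lambda>_. 0)" by (auto simp: Hn_def fun_eq_iff)
    then show ?thesis by simp
  next
    case False
    define t where "t = real n"
    have t: "t > 0" using False by (simp add: t_def)
    have "set_integrable lborel {0<..<t} (\<lambda>s. free_kernel \<omega> 0 (t - s) * ww a b u s)"
      using sol t unfolding delta_duhamel_solution_def ww_def by blast
    then have "(\<lambda>s. indicator {0<..<t} s *\<^sub>R (free_kernel \<omega> 0 (t - s) * ww a b u s)) \<in> borel_measurable lborel"
      unfolding set_integrable_def by (rule borel_measurable_integrable)
    then have m1: "(\<lambda>s. indicator {0<..<t} s *\<^sub>R (free_kernel \<omega> 0 (t - s) * ww a b u s)) \<in> borel_measurable borel"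
      by simp
    have "(\<lambda>s. norm (indicator {0<..<t} s *\<^sub>R (free_kernel \<omega> 0 (t - s) * ww a b u s)) * sqrt (4 * pi * (t - s)))
          \<in> borel_measurable borel"
      using m1 by measurable
    also have "(\<lambda>s. norm (indicator {0<..<t} s *\<^sub>R (free_kernel \<omega> 0 (t - s) * ww a b u s)) * sqrt (4 * pi * (t - s)))
       = Hn n"
    proof
      fix s
      show "norm (indicator {0<..<t} s *\<^sub>R (free_kernel \<omega> 0 (t - s) * ww a b u s)) * sqrt (4 * pi * (t - s)) = Hn n s"
      proof (cases "0 < s \<and> s < t")
        case True
        then have "t - s > 0" by simp
        from kk_sqrt[OF this] show ?thesis using True
          by (simp add: Hn_def t_def norm_mult kernel_norm)
      next
        case False
        then show ?thesis by (auto simp: Hn_def t_def)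
      qed
    qed
    finally show ?thesis .
  qed
  show ?thesis
  proof (rule borel_measurable_LIMSEQ_real[OF _ Hn])
    fix s :: real
    show "(\<lambda>i. Hn i s) \<longlonglongrightarrow> HH a b u s"
    proof (rule tendsto_eventually)
      show "\<forall>\<^sub>F i in sequentially. Hn i s = HH a b u s"
        unfolding eventually_sequentially
      proof (intro exI allI impI)
        fix i assume "nat \<lceil>s\<rceil> + 1 \<le> i"
        then have "s < real i" by linarith
        then show "Hn i s = HH a b u s" by (auto simp: Hn_def HH_def)
      qed
    qed
  qed
qed

lemma stepA:
  assumes sol: "delta_duhamel_solution \<omega> a b u" and t: "t > 0"
  shows "\<exists>j\<ge>0. JJ a b u t = ennreal j \<and> (\<forall>x. cmod (u x t) \<le> kk t + j)"
proof -
  define f where "f x s = indicator {0<..<t} s *\<^sub>R (free_kernel \<omega> x (t - s) * ww a b u s)" for x s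
  define g where "g s = (if 0 < s \<and> s < t then kk (t - s) * HH a b u s else 0)" for s
  have int: "integrable lborel (f x)" and eq: "u x t = free_kernel \<omega> x t + \<i> * integral\<^sup>L lborel (f x)" for x
    using sol t unfolding delta_duhamel_solution_def ww_def f_def set_integrable_def set_lebesgue_integral_def
    by blast+
  have nf: "norm (f x s) = g s" for x s
    by (cases "0 < s \<and> s < t") (auto simp: f_def g_def norm_mult kernel_norm HH_def)
  have gint: "integrable lborel g"
    using integrable_norm[OF int[of 0]] by (simp add: nf)
  have g0: "g s \<ge> 0" for s
    by (metis nf norm_ge_zero)
  define j where "j = integral\<^sup>L lborel g"
  have j0: "j \<ge> 0" unfolding j_def by (intro integral_nonneg_AE) (simp add: g0)
  have "JJ a b u t = (\<integral>\<^sup>+s. ennreal (g s) \<partial>lborel)"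
    unfolding JJ_def g_def by (intro nn_integral_cong) auto
  also have "\<dots> = ennreal j" unfolding j_def
    by (rule nn_integral_eq_integral[OF gint]) (simp add: g0)
  finally have J: "JJ a b u t = ennreal j" .
  have "cmod (u x t) \<le> kk t + j" for x
  proof -
    have "cmod (u x t) \<le> cmod (free_kernel \<omega> x t) + cmod (\<i> * integral\<^sup>L lborel (f x))"
      unfolding eq by (rule norm_triangle_ineq)
    also have "cmod (\<i> * integral\<^sup>L lborel (f x)) \<le> integral\<^sup>L lborel (\<lambda>s. norm (f x s))"
      by (simp add: norm_mult integral_norm_bound)
    also have "integral\<^sup>L lborel (\<lambda>s. norm (f x s)) = j" by (simp add: nf j_def)
    finally show ?thesis using kernel_norm[OF t] by simp
  qed
  with J j0 show ?thesis by blast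
qed

lemma stepT:
  assumes Hm: "HH a b u \<in> borel_measurable borel" and t: "t > 0"
  shows "(\<integral>\<^sup>+s. (if 0 < s \<and> s < t then ennreal (kk (t - s)) else 0) * JJ a b u s \<partial>lborel)
       = (\<integral>\<^sup>+r. (if 0 < r \<and> r < t then ennreal (HH a b u r) * ennreal (1/4) else 0) \<partial>lborel)"
proof -
  note [measurable] = Hm
  define F where "F s r = (if 0 < s \<and> s < t then ennreal (kk (t - s)) else 0) *
     (if 0 < r \<and> r < s then ennreal (kk (s - r) * HH a b u r) else 0)" for s r
  have Fm: "case_prod F \<in> borel_measurable (lborel \<Otimes>\<^sub>M lborel)"
    unfolding F_def kk_def by measurable
  have mJ: "(\<lambda>r. if 0 < r \<and> r < x then ennreal (kk (x - r) * HH a b u r) else 0) \<in> borel_measurable borel" for x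
    unfolding kk_def by measurable
  have "(\<integral>\<^sup>+s. (if 0 < s \<and> s < t then ennreal (kk (t - s)) else 0) * JJ a b u s \<partial>lborel)
      = (\<integral>\<^sup>+s. (\<integral>\<^sup>+r. F s r \<partial>lborel) \<partial>lborel)"
    unfolding JJ_def F_def
    by (intro nn_integral_cong, subst nn_integral_cmult) (auto simp: mJ)
  also have "\<dots> = (\<integral>\<^sup>+r. (\<integral>\<^sup>+s. F s r \<partial>lborel) \<partial>lborel)"
    by (rule lborel_pair.Fubini'[OF Fm, symmetric])
  also have "\<dots> = (\<integral>\<^sup>+r. (if 0 < r \<and> r < t then ennreal (HH a b u r) * ennreal (1/4) else 0) \<partial>lborel)"
  proof (intro nn_integral_cong)
    fix r :: real
    show "(\<integral>\<^sup>+s. F s r \<partial>lborel) = (if 0 < r \<and> r < t then ennreal (HH a b u r) * ennreal (1/4) else 0)"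
    proof (cases "0 < r \<and> r < t")
      case True
      have mB: "(\<lambda>s. if r < s \<and> s < t then ennreal (kk (t - s) * kk (s - r)) else 0) \<in> borel_measurable lborel"
        unfolding kk_def by measurable
      have "(\<lambda>s. F s r) = (\<lambda>s. (if r < s \<and> s < t then ennreal (kk (t - s) * kk (s - r)) else 0) * ennreal (HH a b u r))"
      proof
        fix s show "F s r = (if r < s \<and> s < t then ennreal (kk (t - s) * kk (s - r)) else 0) * ennreal (HH a b u r)"
          using True by (auto simp: F_def ennreal_mult kk_nonneg HH_def mult_ac)
      qed
      then have "(\<integral>\<^sup>+s. F s r \<partial>lborel) =
          (\<integral>\<^sup>+s. (if r < s \<and> s < t then ennreal (kk (t - s) * kk (s - r)) else 0) \<partial>lborel) * ennreal (HH a b u r)"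
        by (simp add: nn_integral_multc[OF mB])
      also have "\<dots> = ennreal (HH a b u r) * ennreal (1/4)"
        using True by (simp add: stepB mult.commute)
      finally show ?thesis using True by simp
    next
      case False
      have "F s r = 0" for s using False by (auto simp: F_def)
      then show ?thesis by (simp only: if_not_P[OF False] nn_integral_0_iff_AE) simp
    qed
  qed
  finally show ?thesis .
qed

lemma HH_bound: "0 < s \<Longrightarrow> HH a b u s \<le> (\<bar>a\<bar> + \<bar>b\<bar>) * cmod (u 0 s)"
proof -
  assume s: "0 < s"
  have "HH a b u s \<le> cmod (complex_of_real a * u 0 s) + cmod (complex_of_real (b * Re (u 0 s)))"
    using s unfolding HH_def ww_def by (simp add: norm_triangle_ineq)
  also have "\<dots> \<le> \<bar>a\<bar> * cmod (u 0 s) + \<bar>b\<bar> * cmod (u 0 s)"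
    by (simp add: norm_mult abs_mult mult_left_mono abs_Re_le_cmod)
  finally show ?thesis by (simp add: algebra_simps)
qed

lemma stepJ:
  assumes sol: "delta_duhamel_solution \<omega> a b u" and t: "t > 0"
    and small: "(\<bar>a\<bar> + \<bar>b\<bar>) * sqrt (4 * pi * t) / 4 \<le> 1/2"
    and J: "JJ a b u t = ennreal j" and j0: "j \<ge> 0"
  shows "j \<le> (\<bar>a\<bar> + \<bar>b\<bar>) / 2"
proof -
  define K where "K = \<bar>a\<bar> + \<bar>b\<bar>"
  have K0: "K \<ge> 0" by (simp add: K_def)
  have Hm: "HH a b u \<in> borel_measurable borel" by (rule HH_meas[OF sol])
  note [measurable] = Hm
  have JJm: "JJ a b u \<in> borel_measurable borel"
    unfolding JJ_def kk_def by measurable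
  note [measurable] = JJm
  define c where "c = sqrt (4 * pi * t) / 4"
  have c0: "c \<ge> 0" using t by (simp add: c_def)
  have "ennreal j = (\<integral>\<^sup>+s. (if 0 < s \<and> s < t then ennreal (kk (t - s) * HH a b u s) else 0) \<partial>lborel)"
    using J by (simp add: JJ_def)
  also have "\<dots> \<le> (\<integral>\<^sup>+s. (if 0 < s \<and> s < t then ennreal (K * (kk (t - s) * kk (s - 0))) else 0) +
        ennreal K * ((if 0 < s \<and> s < t then ennreal (kk (t - s)) else 0) * JJ a b u s) \<partial>lborel)"
  proof (intro nn_integral_mono)
    fix s :: real
    show "(if 0 < s \<and> s < t then ennreal (kk (t - s) * HH a b u s) else 0) \<le>
        (if 0 < s \<and> s < t then ennreal (K * (kk (t - s) * kk (s - 0))) else 0) +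
        ennreal K * ((if 0 < s \<and> s < t then ennreal (kk (t - s)) else 0) * JJ a b u s)"
    proof (cases "0 < s \<and> s < t")
      case True
      then have s: "0 < s" "s < t" by auto
      obtain js where js: "js \<ge> 0" "JJ a b u s = ennreal js" "\<And>x. cmod (u x s) \<le> kk s + js"
        using stepA[OF sol s(1)] by blast
      have k1: "kk (t - s) \<ge> 0" "kk s \<ge> 0" using s by (auto intro: kk_nonneg)
      have "HH a b u s \<le> K * cmod (u 0 s)" using HH_bound[OF s(1), of a b u] by (simp add: K_def)
      also have "\<dots> \<le> K * (kk s + js)" by (rule mult_left_mono[OF js(3) K0])
      finally have hb: "HH a b u s \<le> K * (kk s + js)" .
      have "kk (t - s) * HH a b u s \<le> kk (t - s) * (K * (kk s + js))"
        by (rule mult_left_mono[OF hb k1(1)])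
      also have "\<dots> = K * (kk (t - s) * kk s) + K * (kk (t - s) * js)" by (simp add: algebra_simps)
      finally have "ennreal (kk (t - s) * HH a b u s) \<le> ennreal (K * (kk (t - s) * kk s) + K * (kk (t - s) * js))"
        by (rule ennreal_leI)
      also have "\<dots> = ennreal (K * (kk (t - s) * kk s)) + ennreal K * (ennreal (kk (t - s)) * ennreal js)"
        using K0 k1 js(1) by (simp add: ennreal_plus ennreal_mult)
      finally show ?thesis by (simp only: if_P[OF True] js(2) diff_zero)
    next
      case False
      then show ?thesis by (simp only: if_not_P[OF False]) simp
    qed
  qed
  also have "\<dots> = (\<integral>\<^sup>+s. (if 0 < s \<and> s < t then ennreal (K * (kk (t - s) * kk (s - 0))) else 0) \<partial>lborel) +
        ennreal K * (\<integral>\<^sup>+s. (if 0 < s \<and> s < t then ennreal (kk (t - s)) else 0) * JJ a b u s \<partial>lborel)"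
  proof -
    have m1: "(\<lambda>s. if 0 < s \<and> s < t then ennreal (K * (kk (t - s) * kk (s - 0))) else 0) \<in> borel_measurable lborel"
      unfolding kk_def by measurable
    have m2: "(\<lambda>s. (if 0 < s \<and> s < t then ennreal (kk (t - s)) else 0) * JJ a b u s) \<in> borel_measurable lborel"
      unfolding kk_def by measurable
    have m2K: "(\<lambda>s. ennreal K * ((if 0 < s \<and> s < t then ennreal (kk (t - s)) else 0) * JJ a b u s)) \<in> borel_measurable lborel"
      unfolding kk_def by measurable
    show ?thesis
      by (subst nn_integral_add[OF m1 m2K], subst nn_integral_cmult[OF m2], rule refl)
  qed
  finally have E1: "ennreal j \<le> (\<integral>\<^sup>+s. (if 0 < s \<and> s < t then ennreal (K * (kk (t - s) * kk (s - 0))) else 0) \<partial>lborel) + ennreal K * (\<integral>\<^sup>+s. (if 0 < s \<and> s < t then ennreal (kk (t - s)) else 0) * JJ a b u s \<partial>lborel)" .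
  have E2: "(\<integral>\<^sup>+s. (if 0 < s \<and> s < t then ennreal (K * (kk (t - s) * kk (s - 0))) else 0) \<partial>lborel)
      = ennreal K * ennreal (1/4)"
  proof -
    have "(\<integral>\<^sup>+s. (if 0 < s \<and> s < t then ennreal (K * (kk (t - s) * kk (s - 0))) else 0) \<partial>lborel)
       = (\<integral>\<^sup>+s. ennreal K * (if 0 < s \<and> s < t then ennreal (kk (t - s) * kk (s - 0)) else 0) \<partial>lborel)"
      using K0 by (intro nn_integral_cong) (auto intro!: ennreal_mult mult_nonneg_nonneg kk_nonneg)
    also have "\<dots> = ennreal K * ennreal (1/4)"
      by (subst nn_integral_cmult, unfold kk_def, measurable) (simp add: stepB[OF t, unfolded kk_def])
    finally show ?thesis .
  qed
  have E3: "(\<integral>\<^sup>+s. (if 0 < s \<and> s < t then ennreal (kk (t - s)) else 0) * JJ a b u s \<partial>lborel)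
     = (\<integral>\<^sup>+r. (if 0 < r \<and> r < t then ennreal (HH a b u r) * ennreal (1/4) else 0) \<partial>lborel)"
    by (rule stepT[OF Hm t])
  have "(\<integral>\<^sup>+r. (if 0 < r \<and> r < t then ennreal (HH a b u r) * ennreal (1/4) else 0) \<partial>lborel) \<le> (\<integral>\<^sup>+r. ennreal c * (if 0 < r \<and> r < t then ennreal (kk (t - r) * HH a b u r) else 0) \<partial>lborel)"
  proof (intro nn_integral_mono)
    fix r :: real
    show "(if 0 < r \<and> r < t then ennreal (HH a b u r) * ennreal (1/4) else 0) \<le>
          ennreal c * (if 0 < r \<and> r < t then ennreal (kk (t - r) * HH a b u r) else 0)"
    proof (cases "0 < r \<and> r < t")
      case True
      have H0: "HH a b u r \<ge> 0" by (simp add: HH_def)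
      have "sqrt (4 * pi * (t - r)) \<le> sqrt (4 * pi * t)" using True by simp
      then have "1 \<le> sqrt (4 * pi * t) * kk (t - r)"
        using True by (simp add: kk_def divide_simps)
      then have "1 * HH a b u r / 4 \<le> (sqrt (4 * pi * t) * kk (t - r)) * HH a b u r / 4"
        by (intro divide_right_mono mult_right_mono H0) auto
      then have "HH a b u r * (1/4) \<le> c * (kk (t - r) * HH a b u r)"
        by (simp add: c_def)
      then have "ennreal (HH a b u r * (1/4)) \<le> ennreal (c * (kk (t - r) * HH a b u r))"
        by (rule ennreal_leI)
      moreover have "ennreal (HH a b u r) * ennreal (1/4) = ennreal (HH a b u r * (1/4))"
        by (rule ennreal_mult[symmetric]) (simp_all add: H0)
      moreover have "ennreal c * ennreal (kk (t - r) * HH a b u r) = ennreal (c * (kk (t - r) * HH a b u r))"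
        by (rule ennreal_mult[symmetric]) (use c0 H0 kk_nonneg[of "t - r"] True in simp_all)
      ultimately show ?thesis by (simp only: if_P[OF True])
    next
      case False
      then show ?thesis by (simp only: if_not_P[OF False]) simp
    qed
  qed
  also have "\<dots> = ennreal c * JJ a b u t"
  proof -
    have mm: "(\<lambda>r. if 0 < r \<and> r < t then ennreal (kk (t - r) * HH a b u r) else 0) \<in> borel_measurable lborel"
      unfolding kk_def by measurable
    show ?thesis unfolding JJ_def by (rule nn_integral_cmult[OF mm])
  qed
  also have "\<dots> = ennreal c * ennreal j" by (simp only: J)
  finally have E4: "(\<integral>\<^sup>+r. (if 0 < r \<and> r < t then ennreal (HH a b u r) * ennreal (1/4) else 0) \<partial>lborel) \<le> ennreal c * ennreal j" .
  have "ennreal j \<le> ennreal K * ennreal (1/4) + ennreal K * (\<integral>\<^sup>+r. (if 0 < r \<and> r < t then ennreal (HH a b u r) * ennreal (1/4) else 0) \<partial>lborel)"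
    using E1 unfolding E2 E3 .
  also have "\<dots> \<le> ennreal K * ennreal (1/4) + ennreal K * (ennreal c * ennreal j)"
    by (intro add_left_mono mult_left_mono E4) simp
  also have "\<dots> = ennreal (K * (1/4) + K * (c * j))"
  proof -
    have q1: "ennreal (K * (1/4)) = ennreal K * ennreal (1/4)" by (rule ennreal_mult) (use K0 in simp_all)
    have q2: "ennreal (c * j) = ennreal c * ennreal j" by (rule ennreal_mult) (use c0 j0 in simp_all)
    have q3: "ennreal (K * (c * j)) = ennreal K * ennreal (c * j)" by (rule ennreal_mult) (use K0 c0 j0 in simp_all)
    have q4: "ennreal (K * (1/4) + K * (c * j)) = ennreal (K * (1/4)) + ennreal (K * (c * j))"
      by (rule ennreal_plus) (use K0 c0 j0 in simp_all)
    show ?thesis unfolding q4 q3 q2 q1 ..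
  qed
  finally have "ennreal j \<le> ennreal (K * (1/4) + K * (c * j))" .
  then have "j \<le> K * (1/4) + K * (c * j)"
    by (subst (asm) ennreal_le_iff) (use K0 c0 j0 in simp_all)
  moreover have "K * c \<le> 1/2" using small by (simp add: K_def c_def)
  then have "K * c * j \<le> 1/2 * j" using j0 by (rule mult_right_mono)
  moreover have "K * (c * j) = K * c * j" by simp
  ultimately show ?thesis unfolding K_def by linarith
qed

theorem lemma8p1:
  fixes \<omega> a b :: real and u :: "real \<Rightarrow> real \<Rightarrow> complex"
  assumes "\<omega> > 0"
    and "delta_duhamel_solution \<omega> a b u"
  shows "\<exists>C t0. t0 > 0 \<and> (\<forall>t. 0 < t \<and> t < t0 \<longrightarrow>
           (\<forall>x. cmod (u x t) \<le> C * t powr (-1/2)))"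
proof -
  note sol = assms(2)
  define K where "K = \<bar>a\<bar> + \<bar>b\<bar>"
  have K0: "K \<ge> 0" by (simp add: K_def)
  define t0 where "t0 = min 1 (1 / (4 * pi * (K + 1)\<^sup>2))"
  have t0: "t0 > 0" using K0 by (simp add: t0_def)
  have main: "cmod (u x t) \<le> (1 + K / 2) * t powr (-1/2)" if t: "0 < t" "t < t0" for t x
  proof -
    obtain j where j: "j \<ge> 0" "JJ a b u t = ennreal j" "\<And>x. cmod (u x t) \<le> kk t + j"
      using stepA[OF sol t(1)] by blast
    have "4 * pi * t \<le> 4 * pi * (1 / (4 * pi * (K + 1)\<^sup>2))"
      using t by (intro mult_left_mono) (auto simp: t0_def)
    also have "\<dots> = (1 / (K + 1))\<^sup>2" using K0 by (simp add: power_divide)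
    finally have "sqrt (4 * pi * t) \<le> sqrt ((1 / (K + 1))\<^sup>2)" by (rule real_sqrt_le_mono)
    also have "\<dots> = 1 / (K + 1)" using K0 by simp
    finally have sq: "sqrt (4 * pi * t) \<le> 1 / (K + 1)" .
    have "K * sqrt (4 * pi * t) \<le> K * (1 / (K + 1))" by (rule mult_left_mono[OF sq K0])
    also have "\<dots> \<le> 1" using K0 by (simp add: divide_simps)
    finally have "K * sqrt (4 * pi * t) / 4 \<le> 1/2" by simp
    then have jb: "j \<le> K / 2"
      using stepJ[OF sol t(1) _ j(2) j(1)] by (simp add: K_def)
    have st: "sqrt t \<le> 1" using t by (simp add: t0_def)
    have p: "t powr (-1/2) = 1 / sqrt t" using t
      by (simp add: powr_minus_divide powr_half_sqrt[symmetric])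
    have "kk t \<le> 1 / sqrt t" using t pi_ge_two unfolding kk_def
      by (intro divide_left_mono real_sqrt_le_mono) auto
    moreover have "K / 2 \<le> K / 2 * (1 / sqrt t)"
      using st t K0 by (intro mult_le_cancel_left1[THEN iffD2] disjI1 conjI) (auto simp: divide_simps)
    ultimately have "kk t + j \<le> (1 + K / 2) * (1 / sqrt t)" using jb by (simp add: algebra_simps)
    then show ?thesis using j(3)[of x] p by simp
  qed
  show ?thesis using t0 main by blast
qed

end
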